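(* Let $\Lambda=\{\lambda_i\}_{i\geq 0}$ be a nontrivial numerical semigroup (i.e. $\Lambda\neq\mathbb{N}_0$) with $\lambda_0=0<\lambda_1<\cdots$ and conductor $c=\lambda_k$. Let $\lambda_s$ be an order-zero seed of $\Lambda$, let $\tilde\Lambda=\Lambda\setminus\{\lambda_s\}$, and set $\tilde s=s-k$ (so $0\le\tilde s<\lambda_1$ and $\lambda_s=c+\tilde s$). Let $S(\Lambda)=S_0S_1S_2\cdots$ be the seed string of $\Lambda$, and define the binary string $\tilde S=\tilde S_0\tilde S_1\cdots$ by $\tilde S_\ell=0$ if $\ell=\lambda_i+j$ for some $1\leq i<k$ and $0\leq j<\min(\tilde s,\lambda_{i+1}-\lambda_i)$, and $\tilde S_\ell=S_\ell$ otherwise. Then the seed string of $\tilde\Lambda$, which has conductor $c+\tilde s+1$, is $$S(\tilde\Lambda)=\tilde S_{\tilde s+1}\,\tilde S_{\tilde s+2}\cdots\tilde S_{c-1}\,\underbrace{0\cdots0\,1}_{2\tilde s}\,1\,1$$ (followed by zeros), where the underbraced block consists of $2\tilde s$ bits, namely $2\tilde s-1$ zeros followed by a one (and is empty when $\tilde s=0$). In particular, $S(\tilde\Lambda)=S_1\cdots S_{c-1}\,1\,1$ whenever $\tilde s=0$.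
   Context: A numerical semigroup is a subset $\Lambda\subseteq\mathbb{N}_0$ containing $0$, closed under addition, with finite complement; the elements of $\mathbb{N}_0\setminus\Lambda$ are gaps and their number $g$ is the genus. The elements are enumerated increasingly $\lambda_0=0<\lambda_1<\cdots$; $k$ is the smallest index such that $\lambda_i=i+g$ for all $i\geq k$, and the conductor is $c=\lambda_k$. A generator of a numerical semigroup is a nonzero element not expressible as a sum of two nonzero elements of the semigroup. For a numerical semigroup $\Gamma=\{\gamma_i\}_{i\ge0}$ (increasing enumeration) with conductor $c_\Gamma=\gamma_{k'}$, let $\Gamma_i=\Gamma\setminus\{\gamma_1,\dots,\gamma_i\}$; an element $\gamma_t$ with $t\geq k'$ is an order-$i$ seed of $\Gamma$ ($0\le i<k'$) if $\gamma_t+\gamma_i$ is a generator of $\Gamma_i$; order-zero seeds are the generators $\ge c_\Gamma$. The seed string $S(\Gamma)=S_0S_1S_2\cdots$ is the binary string defined, for $0\le i<k'$ and $0\le j<\gamma_{i+1}-\gamma_i$, by $S_{\gamma_i+j}=1$ if $c_\Gamma+j$ is an order-$i$ seed of $\Gamma$ and $S_{\gamma_i+j}=0$ otherwise, and $S_\ell=0$ for $\ell\ge c_\Gamma$ (so it is identified with its first $c_\Gamma$ bits). Here $\tilde\Lambda=\Lambda\setminus\{\lambda_s\}$ is again a numerical semigroup. *)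

theory Defs
  imports "HOL-Library.Infinite_Set"
begin

definition numerical_semigroup :: "nat set \<Rightarrow> bool" where
  "numerical_semigroup L \<longleftrightarrow> 0 \<in> L \<and> (\<forall>a\<in>L. \<forall>b\<in>L. a + b \<in> L) \<and> finite (UNIV - L)"

definition elem :: "nat set \<Rightarrow> nat \<Rightarrow> nat" where
  "elem L i = enumerate L i"

definition genus :: "nat set \<Rightarrow> nat" where
  "genus L = card (UNIV - L)"

definition cond_index :: "nat set \<Rightarrow> nat" where
  "cond_index L = (LEAST k. \<forall>i\<ge>k. elem L i = i + genus L)"

definition conductor :: "nat set \<Rightarrow> nat" where
  "conductor L = elem L (cond_index L)"

definition generator :: "nat set \<Rightarrow> nat \<Rightarrow> bool" where
  "generator L x \<longleftrightarrow> x \<in> L \<and> x \<noteq> 0 \<and>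
     \<not> (\<exists>a\<in>L. \<exists>b\<in>L. a \<noteq> 0 \<and> b \<noteq> 0 \<and> x = a + b)"

definition remove_first :: "nat set \<Rightarrow> nat \<Rightarrow> nat set" where
  "remove_first L i = L - elem L ` {1..i}"

definition order_seed :: "nat set \<Rightarrow> nat \<Rightarrow> nat \<Rightarrow> bool" where
  "order_seed L i x \<longleftrightarrow> i < cond_index L \<and>
     (\<exists>t\<ge>cond_index L. x = elem L t) \<and> generator (remove_first L i) (x + elem L i)"

text \<open>seed string; True encodes bit 1, False bit 0\<close>
definition seed_string :: "nat set \<Rightarrow> nat \<Rightarrow> bool" where
  "seed_string L l \<longleftrightarrow> (\<exists>i < cond_index L. \<exists>j. j < elem L (Suc i) - elem L i \<and>
       l = elem L i + j \<and> order_seed L i (conductor L + j))"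

end

theory Submission
  imports Defs
begin

definition cmin :: "nat set \<Rightarrow> nat" where
  "cmin G = (LEAST c. \<forall>n\<ge>c. n \<in> G)"

lemma ns_infinite: "numerical_semigroup G \<Longrightarrow> infinite G"
proof
  assume "numerical_semigroup G" "finite G"
  then have "finite (G \<union> (UNIV - G))" unfolding numerical_semigroup_def by auto
  then show False by simp
qed

lemma cmin_ex: "numerical_semigroup G \<Longrightarrow> \<exists>c. \<forall>n\<ge>c. n \<in> G"
proof -
  assume "numerical_semigroup G"
  then have "finite (UNIV - G)" unfolding numerical_semigroup_def by auto
  then obtain k where "UNIV - G \<subseteq> {..<k}" using finite_nat_iff_bounded by blast
  then have "\<forall>n\<ge>k. n \<in> G" by force
  then show ?thesis by blast
qed

lemma cmin_all: "numerical_semigroup G \<Longrightarrow> n \<ge> cmin G \<Longrightarrow> n \<in> G"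
  unfolding cmin_def using LeastI_ex[OF cmin_ex] by blast

lemma cmin_gap: "numerical_semigroup G \<Longrightarrow> 0 < cmin G \<Longrightarrow> cmin G - 1 \<notin> G"
proof
  assume a: "numerical_semigroup G" "0 < cmin G" "cmin G - 1 \<in> G"
  have "\<forall>n\<ge>cmin G - 1. n \<in> G"
  proof (intro allI impI)
    fix n assume "n \<ge> cmin G - 1"
    then have "n = cmin G - 1 \<or> n \<ge> cmin G" by auto
    then show "n \<in> G" using a cmin_all by auto
  qed
  then have "cmin G \<le> cmin G - 1" unfolding cmin_def by (rule Least_le)
  then show False using a by simp
qed

lemma cmin_eqI: "(\<forall>n\<ge>c. n \<in> G) \<Longrightarrow> (0 < c \<Longrightarrow> c - 1 \<notin> G) \<Longrightarrow> cmin G = c"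
  unfolding cmin_def
proof (rule Least_equality)
  fix y assume h: "\<forall>n\<ge>c. n \<in> G" "0 < c \<Longrightarrow> c - 1 \<notin> G" "\<forall>n\<ge>y. n \<in> G"
  show "c \<le> y"
  proof (rule ccontr)
    assume "\<not> c \<le> y"
    then have "c - 1 \<ge> y" "0 < c" by auto
    then show False using h by auto
  qed
qed

lemma elem0: "numerical_semigroup G \<Longrightarrow> elem G 0 = 0"
  unfolding elem_def numerical_semigroup_def by (simp add: enumerate_0 Least_eq_0)

lemma elem_in: "numerical_semigroup G \<Longrightarrow> elem G i \<in> G"
  unfolding elem_def using ns_infinite enumerate_in_set by blast

lemma elem_less_iff[simp]: "numerical_semigroup G \<Longrightarrow> elem G m < elem G n \<longleftrightarrow> m < n"
  unfolding elem_def using ns_infinite by simp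

lemma elem_le_iff[simp]: "numerical_semigroup G \<Longrightarrow> elem G m \<le> elem G n \<longleftrightarrow> m \<le> n"
  unfolding elem_def using ns_infinite by simp

lemma elem_ex: "numerical_semigroup G \<Longrightarrow> a \<in> G \<Longrightarrow> \<exists>m. elem G m = a"
  unfolding elem_def using ns_infinite enumerate_Ex by blast

lemma elem_ge: "numerical_semigroup G \<Longrightarrow> n \<le> elem G n"
  unfolding elem_def using ns_infinite le_enumerate by blast

lemma elem_next: "numerical_semigroup G \<Longrightarrow> a \<in> G \<Longrightarrow> elem G i < a \<Longrightarrow> elem G (Suc i) \<le> a"
proof -
  assume a: "numerical_semigroup G" "a \<in> G" "elem G i < a"
  then obtain m where m: "elem G m = a" using elem_ex by blast
  then have "i < m" using a by (metis elem_less_iff)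
  then have "elem G (Suc i) \<le> elem G m" using a(1) by simp
  then show ?thesis using m by simp
qed

lemma elem_shift: "numerical_semigroup G \<Longrightarrow> elem G m = cmin G \<Longrightarrow> elem G (m + j) = cmin G + j"
proof (induction j)
  case 0 then show ?case by simp
next
  case (Suc j)
  have inf: "infinite G" using Suc ns_infinite by blast
  have "elem G (Suc (m + j)) = (LEAST s. s \<in> G \<and> cmin G + j < s)"
    using Suc enumerate_Suc''[OF inf] unfolding elem_def by simp
  also have "\<dots> = cmin G + Suc j"
    by (rule Least_equality) (auto intro: cmin_all[OF Suc.prems(1)])
  finally show ?case by (simp add: add.commute)
qed

lemma cond_main:
  assumes ns: "numerical_semigroup G"
  shows "conductor G = cmin G" "elem G (cond_index G + j) = cmin G + j"
proof -
  let ?c = "cmin G"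
  obtain m where m: "elem G m = ?c" using elem_ex[OF ns cmin_all[OF ns]] by blast
  have cm: "m \<le> ?c" using elem_ge[OF ns, of m] m by simp
  have seg: "G \<inter> {..<?c} = elem G ` {..<m}"
  proof
    show "G \<inter> {..<?c} \<subseteq> elem G ` {..<m}"
    proof
      fix a assume a: "a \<in> G \<inter> {..<?c}"
      then obtain i where i: "elem G i = a" using elem_ex[OF ns] by blast
      then have "i < m" using a m ns by (metis IntD2 elem_less_iff lessThan_iff)
      then show "a \<in> elem G ` {..<m}" using i by blast
    qed
    show "elem G ` {..<m} \<subseteq> G \<inter> {..<?c}"
    proof
      fix a assume "a \<in> elem G ` {..<m}"
      then obtain i where i: "i < m" "a = elem G i" by blast
      then have "elem G i < elem G m" using ns by simp
      then show "a \<in> G \<inter> {..<?c}" using i m elem_in[OF ns] by simp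
    qed
  qed
  have inj: "inj_on (elem G) {..<m}"
  proof (rule inj_onI)
    fix x y assume "elem G x = elem G y"
    then have "\<not> x < y" "\<not> y < x" using elem_less_iff[OF ns] by (metis less_irrefl)+
    then show "x = y" by simp
  qed
  have cardseg: "card (G \<inter> {..<?c}) = m"
    using seg card_image[OF inj] by simp
  have comp: "UNIV - G = {..<?c} - G"
  proof (rule set_eqI)
    fix x show "x \<in> UNIV - G \<longleftrightarrow> x \<in> {..<?c} - G" using cmin_all[OF ns, of x] by (auto simp: not_le[symmetric])
  qed
  have g: "genus G = ?c - m"
  proof -
    have "genus G = card ({..<?c} - G)" unfolding genus_def comp ..
    also have "\<dots> = card {..<?c} - card ({..<?c} \<inter> G)"
      by (rule card_Diff_subset_Int) simp
    also have "\<dots> = ?c - m" using cardseg by (simp add: Int_commute)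
    finally show ?thesis .
  qed
  have ci: "cond_index G = m"
    unfolding cond_index_def
  proof (rule Least_equality)
    show "\<forall>i\<ge>m. elem G i = i + genus G"
    proof (intro allI impI)
      fix i assume "m \<le> i"
      then have "elem G i = elem G (m + (i - m))" by simp
      also have "\<dots> = ?c + (i - m)" using elem_shift[OF ns m] .
      finally show "elem G i = i + genus G" using g cm \<open>m \<le> i\<close> by simp
    qed
  next
    fix y assume y: "\<forall>i\<ge>y. elem G i = i + genus G"
    show "m \<le> y"
    proof (rule ccontr)
      assume "\<not> m \<le> y"
      then have "elem G (m - 1) = m - 1 + genus G" "0 < m" using y by auto
      then have "elem G (m - 1) = ?c - 1" "0 < ?c" using g cm by auto
      then show False using cmin_gap[OF ns] elem_in[OF ns, of "m - 1"] by auto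
    qed
  qed
  show "conductor G = ?c" unfolding conductor_def ci m ..
  show "elem G (cond_index G + j) = ?c + j" unfolding ci using elem_shift[OF ns m] .
qed

lemma remove_key:
  assumes ns: "numerical_semigroup G"
  shows "(y \<in> remove_first G i \<and> y \<noteq> 0) \<longleftrightarrow> (y \<in> G \<and> elem G i < y)"
proof
  assume h: "y \<in> remove_first G i \<and> y \<noteq> 0"
  then have yG: "y \<in> G" "y \<notin> elem G ` {1..i}" unfolding remove_first_def by auto
  obtain m where m: "elem G m = y" using elem_ex[OF ns yG(1)] by blast
  have "m \<noteq> 0"
  proof
    assume "m = 0" then show False using m h elem0[OF ns] by simp
  qed
  then have "i < m" using yG(2) m by (metis atLeastAtMost_iff image_eqI less_one not_le_imp_less not_less_eq_eq)
  then have "elem G i < elem G m" using ns by simp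
  then show "y \<in> G \<and> elem G i < y" using m yG by simp
next
  assume h: "y \<in> G \<and> elem G i < y"
  have "y \<notin> elem G ` {1..i}"
  proof
    assume "y \<in> elem G ` {1..i}"
    then obtain m where "m \<le> i" "y = elem G m" by auto
    then have "y \<le> elem G i" using ns by simp
    then show False using h by simp
  qed
  then show "y \<in> remove_first G i \<and> y \<noteq> 0" using h unfolding remove_first_def by auto
qed

lemma gen_remove:
  assumes ns: "numerical_semigroup G"
  shows "generator (remove_first G i) z \<longleftrightarrow>
    (z \<in> G \<and> elem G i < z \<and> \<not> (\<exists>a\<in>G. \<exists>b\<in>G. elem G i < a \<and> elem G i < b \<and> z = a + b))"
  unfolding generator_def using remove_key[OF ns] by blast

lemma find_idx:
  assumes ns: "numerical_semigroup G"
  shows "\<exists>i. elem G i \<le> l \<and> l < elem G (Suc i)"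
proof -
  have ex: "l < elem G (Suc l)" using elem_ge[OF ns, of "Suc l"] by simp
  define m where "m = (LEAST m. l < elem G m)"
  have m1: "l < elem G m" unfolding m_def by (rule LeastI[of _ "Suc l"]) (rule ex)
  have "m \<noteq> 0"
  proof
    assume "m = 0" then show False using m1 elem0[OF ns] by simp
  qed
  then obtain i where i: "m = Suc i" by (cases m) auto
  have "\<not> l < elem G i" using not_less_Least[of i "\<lambda>m. l < elem G m"] i unfolding m_def by simp
  then have "elem G i \<le> l" by simp
  then show ?thesis using m1 i by auto
qed

lemma seed_char:
  assumes ns: "numerical_semigroup G"
  shows "seed_string G l \<longleftrightarrow> l < conductor G \<and>
     \<not> (\<exists>a\<in>G. \<exists>b\<in>G. l < a \<and> l < b \<and> conductor G + l = a + b)"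
proof
  assume "seed_string G l"
  then obtain i j where ij: "i < cond_index G" "j < elem G (Suc i) - elem G i"
    "l = elem G i + j" "order_seed G i (conductor G + j)"
    unfolding seed_string_def by blast
  have gen: "generator (remove_first G i) (conductor G + j + elem G i)"
    using ij(4) unfolding order_seed_def by simp
  have "elem G (Suc i) \<le> elem G (cond_index G)" using ij(1) ns by simp
  then have lc: "l < conductor G" using ij unfolding conductor_def by simp
  show "l < conductor G \<and> \<not> (\<exists>a\<in>G. \<exists>b\<in>G. l < a \<and> l < b \<and> conductor G + l = a + b)"
  proof (intro conjI lc notI)
    assume "\<exists>a\<in>G. \<exists>b\<in>G. l < a \<and> l < b \<and> conductor G + l = a + b"
    then obtain a b where ab: "a \<in> G" "b \<in> G" "l < a" "l < b" "conductor G + l = a + b" by blast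
    then have "elem G i < a" "elem G i < b" "conductor G + j + elem G i = a + b" using ij by auto
    then show False using gen ab unfolding gen_remove[OF ns] by blast
  qed
next
  assume h: "l < conductor G \<and> \<not> (\<exists>a\<in>G. \<exists>b\<in>G. l < a \<and> l < b \<and> conductor G + l = a + b)"
  obtain i where i: "elem G i \<le> l" "l < elem G (Suc i)" using find_idx[OF ns] by blast
  have ik: "i < cond_index G"
  proof (rule ccontr)
    assume "\<not> i < cond_index G"
    then have "elem G (cond_index G) \<le> elem G i" using ns by simp
    then show False using h i unfolding conductor_def by simp
  qed
  define j where "j = l - elem G i"
  have j: "j < elem G (Suc i) - elem G i" "l = elem G i + j" using i unfolding j_def by auto
  have t: "elem G (cond_index G + j) = conductor G + j" using cond_main[OF ns] by simp
  have "generator (remove_first G i) (conductor G + j + elem G i)"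
    unfolding gen_remove[OF ns]
  proof (intro conjI notI)
    show "conductor G + j + elem G i \<in> G"
      by (rule cmin_all[OF ns]) (simp add: cond_main[OF ns])
    show "elem G i < conductor G + j + elem G i" using h by simp
  next
    assume "\<exists>a\<in>G. \<exists>b\<in>G. elem G i < a \<and> elem G i < b \<and> conductor G + j + elem G i = a + b"
    then obtain a b where ab: "a \<in> G" "b \<in> G" "elem G i < a" "elem G i < b" "conductor G + j + elem G i = a + b" by blast
    have "elem G (Suc i) \<le> a" "elem G (Suc i) \<le> b" using elem_next[OF ns] ab by auto
    then have "l < a" "l < b" "conductor G + l = a + b" using i j ab by auto
    then show False using h ab by blast
  qed
  then have "order_seed G i (conductor G + j)"
    unfolding order_seed_def using ik t by (metis add.commute le_add2)
  then show "seed_string G l" unfolding seed_string_def using ik j by blast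
qed

theorem lemma4:
  fixes L :: "nat set" and s :: nat
  assumes "numerical_semigroup L"
    and "L \<noteq> UNIV"
    and "order_seed L 0 (elem L s)"
    and "s \<ge> cond_index L"
  shows "conductor (L - {elem L s}) = conductor L + (s - cond_index L) + 1 \<and>
    (let k = cond_index L; c = conductor L; st = s - k; S = seed_string L;
         St = (\<lambda>l. if (\<exists>i j. 1 \<le> i \<and> i < k \<and> j < min st (elem L (Suc i) - elem L i)
                                \<and> l = elem L i + j) then False else S l)
     in seed_string (L - {elem L s}) =
        (\<lambda>p. if p + st + 1 < c then St (st + 1 + p)
             else if p + 1 < c + st then p + 2 = c + st
             else p + 1 = c + st \<or> p = c + st))"
proof -
  note ns = assms(1)
  define k where "k = cond_index L"
  define c where "c = conductor L"
  define st where "st = s - k"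
  define x where "x = elem L s"
  define T where "T = L - {x}"
  have cc: "cmin L = c" unfolding c_def using cond_main(1)[OF ns] by simp
  have xdef: "x = c + st"
    using cond_main(2)[OF ns, of st] assms(4) unfolding x_def st_def k_def cc by simp
  have Lall: "\<And>n. c \<le> n \<Longrightarrow> n \<in> L" using cmin_all[OF ns] cc by simp
  have rf0: "remove_first L 0 = L" unfolding remove_first_def by simp
  have genx: "generator L x"
    using assms(3) unfolding order_seed_def rf0 elem0[OF ns] x_def by simp
  have x0: "x \<noteq> 0" "x \<in> L" using genx unfolding generator_def by auto
  have nsT: "numerical_semigroup T"
    unfolding numerical_semigroup_def
  proof (intro conjI ballI)
    show "0 \<in> T" using x0 ns unfolding T_def numerical_semigroup_def by auto
  next
    fix a b assume ab: "a \<in> T" "b \<in> T"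
    then have "a + b \<in> L" using ns unfolding T_def numerical_semigroup_def by auto
    moreover have "a + b \<noteq> x"
    proof
      assume e: "a + b = x"
      show False
      proof (cases "a = 0 \<or> b = 0")
        case True then show False using e ab unfolding T_def by auto
      next
        case False then show False using genx e ab unfolding generator_def T_def by auto
      qed
    qed
    ultimately show "a + b \<in> T" unfolding T_def by simp
  next
    have "UNIV - T = insert x (UNIV - L)" unfolding T_def using x0 by auto
    then show "finite (UNIV - T)" using ns unfolding numerical_semigroup_def by simp
  qed
  have cT: "conductor T = x + 1"
  proof -
    have "cmin T = x + 1"
    proof (rule cmin_eqI)
      show "\<forall>n\<ge>x + 1. n \<in> T" using Lall xdef unfolding T_def by auto
      show "0 < x + 1 \<Longrightarrow> x + 1 - 1 \<notin> T" unfolding T_def by simp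
    qed
    then show ?thesis using cond_main(1)[OF nsT] by simp
  qed
  have part1: "conductor (L - {elem L s}) = conductor L + (s - cond_index L) + 1"
    using cT xdef unfolding T_def x_def c_def st_def k_def by simp
  have sT: "\<And>p. seed_string T p \<longleftrightarrow> p < x + 1 \<and>
     \<not> (\<exists>a\<in>T. \<exists>b\<in>T. p < a \<and> p < b \<and> x + 1 + p = a + b)"
    using seed_char[OF nsT] cT by simp
  have sL: "\<And>q. seed_string L q \<longleftrightarrow> q < c \<and>
     \<not> (\<exists>a\<in>L. \<exists>b\<in>L. q < a \<and> q < b \<and> c + q = a + b)"
    using seed_char[OF ns] unfolding c_def by simp
  have E_iff: "\<And>q. q < c \<Longrightarrow> (\<exists>i j. 1 \<le> i \<and> i < k \<and> j < min st (elem L (Suc i) - elem L i)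
                                \<and> q = elem L i + j) \<longleftrightarrow> (\<exists>a\<in>L. 0 < a \<and> a \<le> q \<and> q < a + st)"
  proof
    fix q assume qc: "q < c"
    assume "\<exists>i j. 1 \<le> i \<and> i < k \<and> j < min st (elem L (Suc i) - elem L i) \<and> q = elem L i + j"
    then obtain i j where ij: "1 \<le> i" "j < st" "q = elem L i + j" by auto
    have "elem L 0 < elem L i" using ij(1) ns by simp
    then have "0 < elem L i" using elem0[OF ns] by simp
    then show "\<exists>a\<in>L. 0 < a \<and> a \<le> q \<and> q < a + st" using ij elem_in[OF ns, of i] by auto
  next
    fix q assume qc: "q < c"
    assume "\<exists>a\<in>L. 0 < a \<and> a \<le> q \<and> q < a + st"
    then obtain a where a: "a \<in> L" "0 < a" "a \<le> q" "q < a + st" by blast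
    obtain i where i: "elem L i \<le> q" "q < elem L (Suc i)" using find_idx[OF ns] by blast
    obtain m where m: "elem L m = a" using elem_ex[OF ns a(1)] by blast
    have mi: "m \<le> i"
    proof (rule ccontr)
      assume "\<not> m \<le> i"
      then have "elem L (Suc i) \<le> elem L m" using ns by simp
      then show False using m a i by simp
    qed
    then have ai: "a \<le> elem L i" using m ns by (metis elem_le_iff)
    have i1: "1 \<le> i"
    proof (rule ccontr)
      assume "\<not> 1 \<le> i"
      then have "i = 0" by simp
      then show False using ai a elem0[OF ns] by simp
    qed
    have ik: "i < k"
    proof (rule ccontr)
      assume "\<not> i < k"
      then have "elem L k \<le> elem L i" using ns by simp
      then show False using i qc unfolding c_def k_def conductor_def by simp
    qed
    show "\<exists>i j. 1 \<le> i \<and> i < k \<and> j < min st (elem L (Suc i) - elem L i) \<and> q = elem L i + j"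
      using i i1 ik ai a by (intro exI[of _ i] exI[of _ "q - elem L i"]) auto
  qed
  have part2: "seed_string T = (\<lambda>p. if p + st + 1 < c then
         (if (\<exists>i j. 1 \<le> i \<and> i < k \<and> j < min st (elem L (Suc i) - elem L i)
                                \<and> st + 1 + p = elem L i + j) then False else seed_string L (st + 1 + p))
             else if p + 1 < c + st then p + 2 = c + st
             else p + 1 = c + st \<or> p = c + st)"
  proof (rule ext)
    fix p
    show "seed_string T p = (if p + st + 1 < c then
         (if (\<exists>i j. 1 \<le> i \<and> i < k \<and> j < min st (elem L (Suc i) - elem L i)
                                \<and> st + 1 + p = elem L i + j) then False else seed_string L (st + 1 + p))
             else if p + 1 < c + st then p + 2 = c + st
             else p + 1 = c + st \<or> p = c + st)"
    proof (cases "p + st + 1 < c")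
      case A: True
      define q where "q = st + 1 + p"
      have qc: "q < c" using A q_def by simp
      have xq: "x + 1 + p = c + q" using xdef q_def by simp
      have eq: "seed_string T p \<longleftrightarrow> \<not> (\<exists>a\<in>L. 0 < a \<and> a \<le> q \<and> q < a + st) \<and> seed_string L q"
      proof
        assume h: "seed_string T p"
        then have NT: "\<not> (\<exists>a\<in>T. \<exists>b\<in>T. p < a \<and> p < b \<and> c + q = a + b)"
          using sT xq by simp
        have nE: "\<not> (\<exists>a\<in>L. 0 < a \<and> a \<le> q \<and> q < a + st)"
        proof
          assume "\<exists>a\<in>L. 0 < a \<and> a \<le> q \<and> q < a + st"
          then obtain a where a: "a \<in> L" "0 < a" "a \<le> q" "q < a + st" by blast
          define b where "b = c + q - a"
          have "b \<in> L" using Lall a(3) b_def by simp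
          moreover have "b \<noteq> x" "a \<noteq> x" using a b_def xdef qc by auto
          moreover have "p < a" "p < b" "c + q = a + b" using a b_def q_def qc by auto
          ultimately show False using NT a(1) unfolding T_def by blast
        qed
        have "seed_string L q" unfolding sL
        proof (intro conjI qc notI)
          assume "\<exists>a\<in>L. \<exists>b\<in>L. q < a \<and> q < b \<and> c + q = a + b"
          then obtain a b where ab: "a \<in> L" "b \<in> L" "q < a" "q < b" "c + q = a + b" by blast
          then have "a \<noteq> x" "b \<noteq> x" "p < a" "p < b" using xdef q_def by auto
          then show False using NT ab unfolding T_def by blast
        qed
        then show "\<not> (\<exists>a\<in>L. 0 < a \<and> a \<le> q \<and> q < a + st) \<and> seed_string L q" using nE by simp
      next
        assume h: "\<not> (\<exists>a\<in>L. 0 < a \<and> a \<le> q \<and> q < a + st) \<and> seed_string L q"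
        then have NL: "\<not> (\<exists>a\<in>L. \<exists>b\<in>L. q < a \<and> q < b \<and> c + q = a + b)" using sL by simp
        have "\<not> (\<exists>a\<in>T. \<exists>b\<in>T. p < a \<and> p < b \<and> c + q = a + b)"
        proof
          assume "\<exists>a\<in>T. \<exists>b\<in>T. p < a \<and> p < b \<and> c + q = a + b"
          then obtain a b where ab: "a \<in> L" "b \<in> L" "a \<noteq> x" "b \<noteq> x" "p < a" "p < b" "c + q = a + b"
            unfolding T_def by blast
          have "\<not> (q < a \<and> q < b)" using NL ab by blast
          then have "\<not> q < a \<or> \<not> q < b" by simp
          then show False
          proof
            assume "\<not> q < a"
            then have "\<not> q < a + st" using h ab by auto
            then have "a = p + 1" using ab q_def by simp
            then show False using ab xdef q_def by simp
          next
            assume "\<not> q < b"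
            then have "\<not> q < b + st" using h ab by auto
            then have "b = p + 1" using ab q_def by simp
            then show False using ab xdef q_def by simp
          qed
        qed
        then show "seed_string T p" unfolding sT xq using qc xdef q_def by simp
      qed
      have e2: "(\<exists>i j. 1 \<le> i \<and> i < k \<and> j < min st (elem L (Suc i) - elem L i)
                                \<and> q = elem L i + j) \<longleftrightarrow> (\<exists>a\<in>L. 0 < a \<and> a \<le> q \<and> q < a + st)"
        using E_iff[OF qc] .
      show ?thesis
        unfolding if_P[OF A] q_def[symmetric]
        by (cases "\<exists>a\<in>L. 0 < a \<and> a \<le> q \<and> q < a + st"; simp only: eq e2 if_True if_False simp_thms)
    next
      case nA: False
      show ?thesis
      proof (cases "p + 1 < c + st")
        case B: True
        have st1: "1 \<le> st" using nA B by simp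
        show ?thesis
        proof (cases "p + 2 = c + st")
          case True
          have "\<not> (\<exists>a\<in>T. \<exists>b\<in>T. p < a \<and> p < b \<and> x + 1 + p = a + b)"
          proof
            assume "\<exists>a\<in>T. \<exists>b\<in>T. p < a \<and> p < b \<and> x + 1 + p = a + b"
            then obtain a b where ab: "a \<noteq> x" "b \<noteq> x" "p < a" "p < b" "x + 1 + p = a + b"
              unfolding T_def by blast
            then show False using True xdef by simp
          qed
          then show ?thesis using sT True nA B xdef by simp
        next
          case False
          have "\<exists>a\<in>T. \<exists>b\<in>T. p < a \<and> p < b \<and> x + 1 + p = a + b"
          proof (cases "c \<le> p + 2")
            case True
            have "p + 2 \<in> T" "x - 1 \<in> T" using Lall True False B st1 xdef unfolding T_def by auto
            moreover have "p < p + 2" "p < x - 1" "x + 1 + p = (p + 2) + (x - 1)" using B st1 xdef by auto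
            ultimately show ?thesis by blast
          next
            case c2: False
            have "c \<in> T" "c + (st + 1 + p - c) \<in> T" using Lall c2 st1 xdef nA False B unfolding T_def by auto
            moreover have "p < c" "p < c + (st + 1 + p - c)" "x + 1 + p = c + (c + (st + 1 + p - c))"
              using c2 nA xdef by auto
            ultimately show ?thesis by blast
          qed
          then show ?thesis using sT False nA B by simp
        qed
      next
        case nB: False
        show ?thesis
        proof (cases "p + 1 = c + st \<or> p = c + st")
          case True
          have "\<not> (\<exists>a\<in>T. \<exists>b\<in>T. p < a \<and> p < b \<and> x + 1 + p = a + b)"
          proof
            assume "\<exists>a\<in>T. \<exists>b\<in>T. p < a \<and> p < b \<and> x + 1 + p = a + b"
            then obtain a b where ab: "a \<noteq> x" "b \<noteq> x" "p < a" "p < b" "x + 1 + p = a + b"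
              unfolding T_def by blast
            then show False using True xdef by auto
          qed
          then show ?thesis using sT True nA nB xdef by auto
        next
          case False
          then have "\<not> p < x + 1" using nB xdef by simp
          then show ?thesis using sT False nA nB by simp
        qed
      qed
    qed
  qed
  show ?thesis
    using part1 part2 unfolding Let_def T_def x_def c_def st_def k_def by simp
qed

end
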